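(* Let $0<\rho<0.1$ and define $$\phi(x)=\frac{\rho}{1-\rho^2}\|x\|\,e^{-\frac{(1.1\rho\|x\|)^2}{1-\rho^2}-\frac{1.1\rho}{1-\rho^2}\|x\|},\qquad x\in\mathbb{R}^2.$$ Let $\tilde f,\tilde g\colon\mathbb{R}^2\to\Delta_3$ be measurable. Then $$\sum_{d\ge2}\rho^d\sum_{\substack{k\in\mathbb{N}^2\\ \|k\|_1=d}}\Big|\Big\langle\int_{\mathbb{R}^2}\sqrt{k!}h_k(x)\tilde f(x)\gamma_2(x)\,dx,\int_{\mathbb{R}^2}\sqrt{k!}h_k(y)\tilde g(y)\gamma_2(y)\,dy\Big\rangle\Big|\le(5\rho+8\rho^2)\cdot\frac12\Big(\int_{\mathbb{R}^2}\phi\|\tilde f\|^2\gamma_2\,dx+\int_{\mathbb{R}^2}\phi\|\tilde g\|^2\gamma_2\,dx\Big).$$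
   Context: $\Delta_3=\{x\in\mathbb{R}^3:\sum_ix_i=1,x_i\ge0\}$; $\gamma_2$ is the standard Gaussian density on $\mathbb{R}^2$; integrals of $\mathbb{R}^3$-valued functions are taken coordinatewise and $\langle\cdot,\cdot\rangle$, $\|\cdot\|$ are Euclidean. Hermite polynomials: $h_m(t)=\sum_{j=0}^{\lfloor m/2\rfloor}\frac{t^{m-2j}(-1)^j2^{-j}}{j!(m-2j)!}$ for integers $m\ge0$; for $k=(k_1,k_2)\in\mathbb{N}^2$ ($\mathbb{N}=\{0,1,\dots\}$), $h_k(x)=h_{k_1}(x_1)h_{k_2}(x_2)$, $k!=k_1!k_2!$, $\|k\|_1=k_1+k_2$. *)

theory Defs
  imports "HOL-Analysis.Analysis"
begin

definition Delta3 :: "(real^3) set" where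
  "Delta3 = {v. (\<Sum>i\<in>UNIV. v $ i) = 1 \<and> (\<forall>i. v $ i \<ge> 0)}"

definition gauss2 :: "real^2 \<Rightarrow> real" where
  "gauss2 x = exp (- (norm x * norm x) / 2) / (2 * pi)"

definition herm :: "nat \<Rightarrow> real \<Rightarrow> real" where
  "herm m t = (\<Sum>j\<le>m div 2. t ^ (m - 2*j) * (-1) ^ j * (1/2) ^ j / (fact j * fact (m - 2*j)))"

definition herm2 :: "nat \<times> nat \<Rightarrow> real^2 \<Rightarrow> real" where
  "herm2 k x = herm (fst k) (x $ 1) * herm (snd k) (x $ 2)"

definition kfact :: "nat \<times> nat \<Rightarrow> real" where
  "kfact k = fact (fst k) * fact (snd k)"

definition hcoef :: "nat \<times> nat \<Rightarrow> (real^2 \<Rightarrow> real^3) \<Rightarrow> real^3" where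
  "hcoef k f = (\<chi> i. LINT x|lborel. sqrt (kfact k) * herm2 k x * (f x $ i) * gauss2 x)"

definition phiw :: "real \<Rightarrow> real^2 \<Rightarrow> real" where
  "phiw \<rho> x = \<rho> / (1 - (\<rho> * \<rho>)) * norm x *
     exp (- ((11/10 * \<rho> * norm x) * (11/10 * \<rho> * norm x)) / (1 - (\<rho> * \<rho>)) - (11/10 * \<rho>) / (1 - (\<rho> * \<rho>)) * norm x)"

definition level_term :: "real \<Rightarrow> (real^2 \<Rightarrow> real^3) \<Rightarrow> (real^2 \<Rightarrow> real^3) \<Rightarrow> nat \<Rightarrow> real" where
  "level_term \<rho> f g d = \<rho> ^ d *
     (\<Sum>k\<in>{k::nat\<times>nat. fst k + snd k = d}. \<bar>hcoef k f \<bullet> hcoef k g\<bar>)"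

end

theory Submission
  imports Defs "HOL-Probability.Probability" "HOL-Computational_Algebra.Polynomial"
begin


definition hc :: "nat \<Rightarrow> nat \<Rightarrow> real" where
  "hc m i = (if i \<le> m \<and> even (m - i) then (-1)^((m-i) div 2) * (1/2)^((m-i) div 2) / (fact ((m-i) div 2) * fact i) else 0)"

lemma hc_closed: "hc (i + 2*J) i = (-1)^J * (1/2)^J / (fact J * fact i)"
  by (simp add: hc_def)

lemma hc_zero: "\<not> (\<exists>J. m = i + 2*J) \<Longrightarrow> hc m i = 0"
proof -
  assume nJ: "\<not> (\<exists>J. m = i + 2*J)"
  have "\<not> (i \<le> m \<and> even (m - i))"
  proof
    assume "i \<le> m \<and> even (m - i)"
    then have e: "even (m - i)" and le: "i \<le> m" by auto
    from e obtain k where "m - i = 2*k" by (rule evenE)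
    then have "m = i + 2*k" using le by simp
    with nJ show False by blast
  qed
  then show ?thesis unfolding hc_def by simp
qed

lemma hc_cases:
  obtains J where "m = i + 2*J" | "hc m i = 0"
  using hc_zero by blast

definition HP :: "nat \<Rightarrow> real poly" where
  "HP m = (\<Sum>i\<le>m. monom (hc m i) i)"

lemma coeff_HP: "coeff (HP m) i = hc m i"
proof -
  have "coeff (HP m) i = (\<Sum>j\<le>m. if j = i then hc m j else 0)"
    by (simp add: HP_def coeff_sum coeff_monom)
  also have "\<dots> = hc m i"
    by (auto simp: hc_def)
  finally show ?thesis .
qed

lemma pderiv_HP: "pderiv (HP (Suc m)) = HP m"
proof (rule poly_eqI)
  fix i
  show "coeff (pderiv (HP (Suc m))) i = coeff (HP m) i"
  proof (cases "\<exists>J. m = i + 2*J")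
    case True
    then obtain J where m: "m = i + 2*J" by blast
    have "Suc m = Suc i + 2*J" using m by simp
    have "coeff (pderiv (HP (Suc m))) i = of_nat (Suc i) * hc (Suc i + 2*J) (Suc i)"
      by (simp add: coeff_pderiv coeff_HP \<open>Suc m = Suc i + 2*J\<close>)
    also have "\<dots> = of_nat (Suc i) * ((-1)^J * (1/2)^J / (fact J * fact (Suc i)))"
      by (simp only: hc_closed)
    also have "\<dots> = (-1)^J * (1/2)^J / (fact J * fact i)"
    proof -
      have "(fact (Suc i)::real) = real (Suc i) * fact i" by (rule fact_Suc)
      then show ?thesis by (simp add: field_simps del: of_nat_Suc)
    qed
    also have "\<dots> = coeff (HP m) i" by (simp add: coeff_HP m hc_closed)
    finally show ?thesis .
  next
    case False
    then have "\<not> (\<exists>J. Suc m = Suc i + 2*J)" by simp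
    then show ?thesis using False by (simp add: coeff_pderiv coeff_HP hc_zero)
  qed
qed

lemma hc_gt: "m < i \<Longrightarrow> hc m i = 0"
  by (simp add: hc_def)

lemma rec_HP: "smult (of_nat (Suc m)) (HP (Suc m)) = pCons 0 (HP m) - pderiv (HP m)"
proof (rule poly_eqI)
  fix i
  show "coeff (smult (of_nat (Suc m)) (HP (Suc m))) i = coeff (pCons 0 (HP m) - pderiv (HP m)) i"
  proof (cases "\<exists>J. Suc m = i + 2*J")
    case False
    have a: "hc (Suc m) i = 0" using False by (rule hc_zero)
    have b: "hc m (Suc i) = 0"
    proof (rule hc_zero, rule notI)
      assume "\<exists>J. m = Suc i + 2*J"
      then obtain J where "m = Suc i + 2*J" by blast
      then have "Suc m = i + 2*(Suc J)" by simp
      with False show False by blast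
    qed
    have c: "coeff (pCons 0 (HP m)) i = 0"
    proof (cases i)
      case (Suc j)
      have "hc m j = 0"
      proof (rule hc_zero, rule notI)
        assume "\<exists>J. m = j + 2*J"
        then obtain J where "m = j + 2*J" by blast
        then have "Suc m = i + 2*J" using Suc by simp
        with False show False by blast
      qed
      then show ?thesis using Suc by (simp add: coeff_HP)
    qed simp
    show ?thesis using a b c by (simp add: coeff_pderiv coeff_HP)
  next
    case True
    then obtain J where J: "Suc m = i + 2*J" by blast
    show ?thesis
    proof (cases i)
      case 0
      then obtain K where K: "J = Suc K" using J by (cases J) auto
      have m: "m = 1 + 2*K" using J K 0 by simp
      have l: "coeff (smult (of_nat (Suc m)) (HP (Suc m))) i = real (Suc m) * ((-1)^J * (1/2)^J / (fact J * fact 0))"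
        using hc_closed[of 0 J] J 0 by (simp add: coeff_HP)
      have r: "coeff (pCons 0 (HP m) - pderiv (HP m)) i = - ((-1)^K * (1/2)^K / (fact K * fact 1))"
        using hc_closed[of 1 K] m 0 by (simp add: coeff_HP coeff_pderiv)
      have e: "real (Suc m) = 2 * real (Suc K)" using m by simp
      have f: "(fact J :: real) = real (Suc K) * fact K" using K by simp
      have "real (Suc m) * ((-1)^J * (1/2)^J / (fact J * fact 0)) = - ((-1)^K * (1/2)^K / (fact K * fact 1))"
        unfolding e f K by (simp del: of_nat_Suc)
      then show ?thesis using l r by simp
    next
      case (Suc j)
      have m: "m = j + 2*J" using J Suc by simp
      have r1: "coeff (pCons 0 (HP m)) i = (-1)^J * (1/2)^J / (fact J * fact j)"
        using hc_closed[of j J] m Suc by (simp add: coeff_HP)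
      have l: "coeff (smult (of_nat (Suc m)) (HP (Suc m))) i = real (Suc m) * ((-1)^J * (1/2)^J / (fact J * fact i))"
        using hc_closed[of i J] J by (simp add: coeff_HP)
      show ?thesis
      proof (cases J)
        case 0
        have z: "hc m (Suc i) = 0" using m 0 Suc by (intro hc_gt) simp
        have f: "(fact i :: real) = real (Suc j) * fact j" using Suc by simp
        have "real (Suc m) * ((-1)^J * (1/2)^J / (fact J * fact i)) = 1 / fact j"
          unfolding f using 0 m \<open>i = Suc j\<close> by (simp del: of_nat_Suc)
        moreover have "coeff (pCons 0 (HP m) - pderiv (HP m)) i = 1 / fact j"
          using r1 z 0 by (simp add: coeff_pderiv coeff_HP)
        ultimately show ?thesis using l by simp
      next
        case (Suc K)
        have m2: "m = Suc i + 2*K" using m Suc \<open>i = Suc j\<close> by simp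
        have r2: "coeff (pderiv (HP m)) i = real (Suc i) * ((-1)^K * (1/2)^K / (fact K * fact (Suc i)))"
          using hc_closed[of "Suc i" K] m2 by (simp add: coeff_HP coeff_pderiv)
        have e: "real (Suc m) = real j + 2 * real K + 3" using m2 \<open>i = Suc j\<close> by simp
        have f1: "(fact i :: real) = real (Suc j) * fact j" using \<open>i = Suc j\<close> by simp
        have f2: "(fact (Suc i) :: real) = real (Suc i) * fact i" by simp
        have f3: "(fact J :: real) = real (Suc K) * fact K" using Suc by simp
        define X where "X = (-1)^K * (1/2)^K / (fact K * fact j :: real)"
        have p1: "(-1)^J * (1/2)^J / (fact J * fact j) = - X / (2 * real (Suc K))"
          unfolding X_def f3 Suc by (simp del: of_nat_Suc)
        have p2: "real (Suc i) * ((-1)^K * (1/2)^K / (fact K * fact (Suc i))) = X / real (Suc j)"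
          unfolding X_def f2 f1 by (simp del: of_nat_Suc)
        have p3: "real (Suc m) * ((-1)^J * (1/2)^J / (fact J * fact i)) = - (real j + 2 * real K + 3) * X / (2 * real (Suc K) * real (Suc j))"
          unfolding X_def e f3 f1 Suc by (simp add: field_simps del: of_nat_Suc)
        have "coeff (pCons 0 (HP m) - pderiv (HP m)) i = - X / (2 * real (Suc K)) - X / real (Suc j)"
          using r1 r2 p1 p2 by simp
        also have "\<dots> = real (Suc m) * ((-1)^J * (1/2)^J / (fact J * fact i))"
          unfolding p3 by (simp add: field_simps del: of_nat_Suc) (simp add: algebra_simps)
        finally show ?thesis using l by simp
      qed
    qed
  qed
qed

lemma poly_HP: "poly (HP m) t = herm m t"
proof -
  have "poly (HP m) t = (\<Sum>i\<le>m. hc m i * t^i)" by (simp add: HP_def poly_sum poly_monom)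
  also have "\<dots> = (\<Sum>i\<in>(\<lambda>j. m - 2*j) ` {..m div 2}. hc m i * t^i)"
  proof (rule sum.mono_neutral_right)
    show "(\<lambda>j. m - 2*j) ` {..m div 2} \<subseteq> {..m}" by auto
    show "\<forall>i\<in>{..m} - (\<lambda>j. m - 2*j) ` {..m div 2}. hc m i * t^i = 0"
    proof
      fix i assume i: "i \<in> {..m} - (\<lambda>j. m - 2*j) ` {..m div 2}"
      have "hc m i = 0"
      proof (rule hc_zero, rule notI)
        assume "\<exists>J. m = i + 2*J"
        then obtain J where J: "m = i + 2*J" by blast
        then have "J \<le> m div 2" "i = m - 2*J" by auto
        with i show False by auto
      qed
      then show "hc m i * t^i = 0" by simp
    qed
  qed simp
  also have "\<dots> = (\<Sum>j\<le>m div 2. hc m (m-2*j) * t^(m-2*j))"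
    by (subst sum.reindex) (auto simp: inj_on_def)
  also have "\<dots> = herm m t"
    unfolding herm_def
  proof (rule sum.cong)
    fix j assume "j \<in> {..m div 2}"
    then have "m = (m - 2*j) + 2*j" by auto
    then have "hc m (m-2*j) = (-1)^j * (1/2)^j / (fact j * fact (m - 2*j))"
      using hc_closed[of "m-2*j" j] by simp
    then show "hc m (m-2*j) * t^(m-2*j) = t ^ (m - 2*j) * (-1) ^ j * (1/2) ^ j / (fact j * fact (m - 2*j))"
      by simp
  qed simp
  finally show ?thesis .
qed

lemma HP_0: "HP 0 = 1"
  by (rule poly_eqI) (simp add: coeff_HP hc_def coeff_1)


definition E :: "real poly \<Rightarrow> real" where
  "E p = (LINT t|lborel. std_normal_density t * poly p t)"

definition mom :: "nat \<Rightarrow> real" where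
  "mom i = (LINT t|lborel. std_normal_density t * t^i)"

lemma poly_sum_N: "degree (p::real poly) < N \<Longrightarrow> poly p t = (\<Sum>i<N. coeff p i * t^i)"
proof -
  assume N: "degree p < N"
  have "poly p t = (\<Sum>i\<le>degree p. coeff p i * t^i)" by (rule poly_altdef)
  also have "\<dots> = (\<Sum>i<N. coeff p i * t^i)"
    using N by (intro sum.mono_neutral_left) (auto simp: coeff_eq_0)
  finally show ?thesis .
qed

lemma integrable_E: "integrable lborel (\<lambda>t. std_normal_density t * poly p t)"
proof -
  have eq: "(\<lambda>t. std_normal_density t * poly p t) = (\<lambda>t. \<Sum>i<Suc (degree p). coeff p i * (std_normal_density t * t^i))"
    by (rule ext) (simp add: poly_sum_N[of p "Suc (degree p)"] sum_distrib_left mult_ac del: sum.lessThan_Suc)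
  have "integrable lborel (\<lambda>t. \<Sum>i<Suc (degree p). coeff p i * (std_normal_density t * t^i))"
    by (intro Bochner_Integration.integrable_sum integrable_mult_right integrable_std_normal_moment)
  then show ?thesis by (subst eq)
qed

lemma E_sum: "degree p < N \<Longrightarrow> E p = (\<Sum>i<N. coeff p i * mom i)"
proof -
  assume N: "degree p < N"
  have "E p = (LINT t|lborel. (\<Sum>i<N. coeff p i * (std_normal_density t * t^i)))"
    unfolding E_def by (rule Bochner_Integration.integral_cong) (simp_all add: poly_sum_N[OF N] sum_distrib_left mult_ac)
  also have "\<dots> = (\<Sum>i<N. coeff p i * mom i)"
    unfolding mom_def
    by (simp add: integral_sum integrable_mult_right integrable_std_normal_moment)
  finally show ?thesis .
qed

lemma E_add: "E (p + q) = E p + E q"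
  unfolding E_def by (simp add: distrib_left integrable_E)

lemma E_diff: "E (p - q) = E p - E q"
  unfolding E_def by (simp add: right_diff_distrib integrable_E)

lemma E_smult: "E (smult c p) = c * E p"
  unfolding E_def by (simp add: mult.left_commute[of _ c])

lemma E_0: "E 0 = 0"
  unfolding E_def by simp

lemma mom_even: "mom (2*k) = fact (2 * k) / (2^k * fact k)"
  unfolding mom_def by (rule integral_std_normal_moment_even)

lemma mom_odd: "mom (2*k+1) = 0"
  unfolding mom_def by (rule integral_std_normal_moment_odd)

lemma mom_rec: "mom (Suc (Suc i)) = real (Suc i) * mom i"
proof (cases "even i")
  case True
  then obtain k where k: "i = 2*k" by (rule evenE)
  have "mom (Suc (Suc i)) = mom (2 * Suc k)" using k by simp
  also have "\<dots> = fact (2 * Suc k) / (2^Suc k * fact (Suc k))" by (rule mom_even)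
  also have "\<dots> = real (Suc i) * (fact (2 * k) / (2^k * fact k))"
  proof -
    have f1: "(fact (2 * Suc k) :: real) = (2*(real k+1)) * ((2*real k+1)*fact(2*k))"
      by (simp add: algebra_simps)
    have f2: "(2^Suc k * fact (Suc k) :: real) = (2*(real k+1)) * (2^k * fact k)" by simp
    have nz: "(2*(real k+1)) \<noteq> 0" by simp
    have "fact (2 * Suc k) / (2^Suc k * fact (Suc k)) = ((2*real k+1)*fact(2*k)) / (2^k * fact k)"
      unfolding f1 f2 using nz by (rule mult_divide_mult_cancel_left)
    then show ?thesis using k by simp
  qed
  also have "\<dots> = real (Suc i) * mom i" using k by (simp add: mom_even)
  finally show ?thesis .
next
  case False
  then obtain k where k: "i = 2*k+1" by (rule oddE)
  have "mom (Suc (Suc i)) = mom (2*(Suc k)+1)" using k by simp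
  then show ?thesis using k mom_odd[of k] mom_odd[of "Suc k"] by simp
qed

lemma mom_1: "mom 1 = 0"
  using mom_odd[of 0] by simp

lemma mom_0: "mom 0 = 1"
  using mom_even[of 0] by simp

lemma E_pCons: "E (pCons 0 p) = E (pderiv p)"
proof -
  define D where "D = degree p"
  have "E (pCons 0 p) = (\<Sum>i<Suc (Suc D). coeff (pCons 0 p) i * mom i)"
    by (rule E_sum) (simp add: D_def degree_pCons_eq_if)
  also have "\<dots> = (\<Sum>i<Suc D. coeff p i * mom (Suc i))"
    by (subst sum.lessThan_Suc_shift) simp
  also have "\<dots> = (\<Sum>i<D. coeff p (Suc i) * mom (Suc (Suc i)))"
    by (subst sum.lessThan_Suc_shift) (simp add: mom_1[unfolded One_nat_def])
  also have "\<dots> = (\<Sum>i<D. real (Suc i) * coeff p (Suc i) * mom i)"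
    by (simp add: mom_rec mult_ac)
  also have "\<dots> = (\<Sum>i<Suc D. coeff (pderiv p) i * mom i)"
    by (simp add: coeff_pderiv D_def coeff_eq_0)
  also have "\<dots> = E (pderiv p)"
    by (rule E_sum[symmetric]) (simp add: D_def degree_pderiv)
  finally show ?thesis .
qed


lemma E_HP_mult: "E (HP n * q) = E ((pderiv ^^ n) q) / fact n"
proof (induction n arbitrary: q)
  case 0 then show ?case by (simp add: HP_0)
next
  case (Suc n)
  have "real (Suc n) * E (HP (Suc n) * q) = E (smult (real (Suc n)) (HP (Suc n)) * q)"
    by (simp add: E_smult)
  also have "\<dots> = E ((pCons 0 (HP n) - pderiv (HP n)) * q)" by (simp only: rec_HP)
  also have "\<dots> = E (pCons 0 (HP n * q)) - E (pderiv (HP n) * q)"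
    by (simp add: left_diff_distrib E_diff)
  also have "\<dots> = E (HP n * pderiv q)" by (simp add: E_pCons pderiv_mult E_add ac_simps)
  also have "\<dots> = E ((pderiv ^^ n) (pderiv q)) / fact n" by (rule Suc.IH)
  also have "\<dots> = E ((pderiv ^^ Suc n) q) / fact n" by (simp del: funpow.simps add: funpow_Suc_right)
  finally have "real (Suc n) * E (HP (Suc n) * q) = E ((pderiv ^^ Suc n) q) / fact n" .
  then show ?case by (simp add: field_simps del: of_nat_Suc)
qed

lemma pderiv_pow_HP: "(pderiv ^^ n) (HP (n + m)) = HP m"
proof (induction n)
  case (Suc n)
  have "(pderiv ^^ Suc n) (HP (Suc n + m)) = (pderiv ^^ n) (pderiv (HP (Suc (n + m))))"
    by (simp del: funpow.simps add: funpow_Suc_right)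
  also have "\<dots> = HP m" using Suc.IH by (simp add: pderiv_HP)
  finally show ?case .
qed simp

lemma pderiv_pow_0: "(pderiv ^^ n) (0::real poly) = 0"
  by (induction n) auto

lemma pderiv_pow_1: "0 < n \<Longrightarrow> (pderiv ^^ n) (1::real poly) = 0"
proof -
  assume "0 < n"
  then obtain k where n: "n = Suc k" by (cases n) auto
  show ?thesis unfolding n funpow_Suc_right by (simp add: pderiv_pow_0)
qed

lemma pderiv_pow_HP_gt: "m < n \<Longrightarrow> (pderiv ^^ n) (HP m) = 0"
proof -
  assume "m < n"
  then obtain k where n: "n = (n - m) + m" "0 < n - m" by auto
  have "(pderiv ^^ n) (HP m) = (pderiv ^^ (n - m)) ((pderiv ^^ m) (HP (m + 0)))"
    by (subst n(1)) (simp add: funpow_add)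
  also have "\<dots> = 0" by (simp only: pderiv_pow_HP HP_0 pderiv_pow_1 n(2))
  finally show ?thesis .
qed

lemma E_1: "E 1 = 1"
  using E_sum[of "1::real poly" 1] mom_0 by simp

lemma E_HP: "E (HP j) = (if j = 0 then 1 else 0)"
proof (cases "j = 0")
  case True then show ?thesis by (simp add: HP_0 E_1)
next
  case False
  have "E (HP j) = E (HP j * 1)" by simp
  also have "\<dots> = E ((pderiv ^^ j) 1) / fact j" by (rule E_HP_mult)
  also have "\<dots> = 0" using False by (simp add: pderiv_pow_1 E_0)
  finally show ?thesis using False by simp
qed

lemma E_HP_HP_le: "n \<le> m \<Longrightarrow> E (HP n * HP m) = (if n = m then 1 / fact n else 0)"
proof -
  assume "n \<le> m"
  then obtain d where m: "m = n + d" using le_iff_add by blast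
  have "E (HP n * HP m) = E (HP d) / fact n" by (simp add: E_HP_mult m pderiv_pow_HP)
  then show ?thesis by (simp add: E_HP m)
qed

lemma E_HP_HP: "E (HP n * HP m) = (if n = m then 1 / fact n else 0)"
proof (cases "n \<le> m")
  case True then show ?thesis by (rule E_HP_HP_le)
next
  case False
  then have "E (HP m * HP n) = 0" using E_HP_HP_le[of m n] by simp
  then show ?thesis using False by (simp add: mult.commute)
qed




interpretation lborel_prod_sf: product_sigma_finite "\<lambda>_::'i. (lborel :: real measure)"
  by standard

lemma lborel_integral_prod_euclid:
  fixes w :: "'a::euclidean_space \<Rightarrow> real \<Rightarrow> real"
  assumes int: "\<And>b. b \<in> Basis \<Longrightarrow> integrable lborel (w b)"
  shows "integrable lborel (\<lambda>x::'a. \<Prod>b\<in>Basis. w b (x \<bullet> b))"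
    and "(LINT x|lborel. (\<Prod>b\<in>Basis. w b (x \<bullet> b))) = (\<Prod>b\<in>Basis. (LINT t|lborel. w b t))"
proof -
  let ?g = "\<lambda>f. \<Sum>b\<in>(Basis::'a set). f b *\<^sub>R b"
  have gm: "?g \<in> measurable (\<Pi>\<^sub>M b\<in>(Basis::'a set). lborel) borel" by measurable
  have wm: "\<And>b. b \<in> Basis \<Longrightarrow> w b \<in> borel_measurable borel"
    using int by (simp add: borel_measurable_integrable)
  have fm: "(\<lambda>x::'a. \<Prod>b\<in>Basis. w b (x \<bullet> b)) \<in> borel_measurable borel"
    by (intro borel_measurable_prod measurable_compose[OF _ wm]) auto
  have comp: "(\<lambda>f. \<Prod>b\<in>(Basis::'a set). w b (?g f \<bullet> b)) = (\<lambda>f. \<Prod>b\<in>(Basis::'a set). w b (f b))"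
  proof (rule ext, rule prod.cong)
    fix f :: "'a \<Rightarrow> real" and b :: 'a assume b: "b \<in> Basis"
    have "?g f \<bullet> b = (\<Sum>b'\<in>Basis. f b' * (b' \<bullet> b))" by (simp add: inner_sum_left)
    also have "\<dots> = f b" using b by (simp add: inner_Basis if_distrib cong: if_cong)
    finally show "w b (?g f \<bullet> b) = w b (f b)" by simp
  qed simp
  have pint: "integrable (\<Pi>\<^sub>M b\<in>(Basis::'a set). lborel) (\<lambda>f. \<Prod>b\<in>(Basis::'a set). w b (f b))"
    by (rule lborel_prod_sf.product_integrable_prod) (auto intro: int)
  show "integrable lborel (\<lambda>x::'a. \<Prod>b\<in>Basis. w b (x \<bullet> b))"
    apply (subst lborel_eq)
    apply (subst integrable_distr_eq[OF gm fm])
    using pint comp by simp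
  show "(LINT x|lborel. (\<Prod>b\<in>Basis. w b (x \<bullet> b))) = (\<Prod>b\<in>Basis. (LINT t|lborel. w b t))"
    apply (subst lborel_eq)
    apply (subst integral_distr[OF gm fm])
    unfolding comp
    by (rule lborel_prod_sf.product_integral_prod) (auto intro: int)
qed


lemma Basis_2: "(Basis :: (real^2) set) = {axis 1 1, axis 2 1}"
  by (auto simp: Basis_vec_def) (metis exhaust_2)

lemma axis_12: "axis (1::2) (1::real) \<noteq> axis 2 1"
  by (simp add: axis_eq_axis)

lemma gauss2_eq: "gauss2 x = std_normal_density (x$1) * std_normal_density (x$2)"
proof -
  have n: "norm x * norm x = (x$1)^2 + (x$2)^2"
  proof -
    have "norm x * norm x = x \<bullet> x" by (simp add: power2_norm_eq_inner[symmetric] power2_eq_square)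
    then show ?thesis by (simp add: inner_vec_def sum_2 power2_eq_square)
  qed
  have s: "sqrt (2*pi) * sqrt (2*pi) = 2*pi" by simp
  have ee: "- ((x$1)^2 + (x$2)^2) / 2 = - ((x$1)^2) / 2 + - ((x$2)^2) / 2" by (simp add: field_simps)
  have "gauss2 x = exp (- ((x$1)^2) / 2 + - ((x$2)^2) / 2) / (2*pi)"
    unfolding gauss2_def n ee by simp
  also have "\<dots> = (exp (- ((x$1)^2) / 2) * exp (- ((x$2)^2) / 2)) / (sqrt (2*pi) * sqrt (2*pi))"
    by (simp only: exp_add s)
  also have "\<dots> = std_normal_density (x$1) * std_normal_density (x$2)"
    unfolding std_normal_density_def by simp
  finally show ?thesis .
qed

lemma prod2:
  fixes u v :: "real \<Rightarrow> real"
  assumes iu: "integrable lborel (\<lambda>t. std_normal_density t * u t)"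
      and iv: "integrable lborel (\<lambda>t. std_normal_density t * v t)"
  shows "integrable lborel (\<lambda>x::real^2. u (x$1) * v (x$2) * gauss2 x)"
    and "(LINT x|lborel. u (x$1) * v (x$2) * gauss2 x) =
         (LINT t|lborel. std_normal_density t * u t) * (LINT t|lborel. std_normal_density t * v t)"
proof -
  define w where "w = (\<lambda>b::real^2. if b = axis 1 1 then (\<lambda>t. std_normal_density t * u t) else (\<lambda>t. std_normal_density t * v t))"
  have int: "\<And>b. b \<in> Basis \<Longrightarrow> integrable lborel (w b)" using iu iv by (simp add: w_def)
  have eq: "(\<lambda>x::real^2. \<Prod>b\<in>Basis. w b (x \<bullet> b)) = (\<lambda>x. u (x$1) * v (x$2) * gauss2 x)"
    by (rule ext) (simp add: Basis_2 axis_eq_axis w_def inner_axis gauss2_eq)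
  have eq2: "(\<Prod>b\<in>(Basis::(real^2) set). (LINT t|lborel. w b t)) =
         (LINT t|lborel. std_normal_density t * u t) * (LINT t|lborel. std_normal_density t * v t)"
    by (simp add: Basis_2 axis_eq_axis w_def)
  show "integrable lborel (\<lambda>x::real^2. u (x$1) * v (x$2) * gauss2 x)"
    using lborel_integral_prod_euclid(1)[where w=w, OF int] eq by simp
  show "(LINT x|lborel. u (x$1) * v (x$2) * gauss2 x) =
         (LINT t|lborel. std_normal_density t * u t) * (LINT t|lborel. std_normal_density t * v t)"
    using lborel_integral_prod_euclid(2)[where w=w, OF int] eq eq2 by simp
qed




lemma herm_E: "(LINT t|lborel. std_normal_density t * (herm n t * herm m t)) = E (HP n * HP m)"
  unfolding E_def by (simp add: poly_HP)

lemma integrable_herm: "integrable lborel (\<lambda>t. std_normal_density t * (c * herm n t * herm m t))"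
proof -
  have "integrable lborel (\<lambda>t. std_normal_density t * poly (smult c (HP n * HP m)) t)" by (rule integrable_E)
  then show ?thesis by (simp add: poly_HP mult_ac)
qed

definition hn :: "nat \<Rightarrow> real \<Rightarrow> real" where
  "hn m t = sqrt (fact m) * herm m t"

definition H :: "nat \<times> nat \<Rightarrow> real^2 \<Rightarrow> real" where
  "H k x = hn (fst k) (x$1) * hn (snd k) (x$2)"

lemma H_eq: "sqrt (kfact k) * herm2 k x = H k x"
  by (simp add: kfact_def herm2_def H_def hn_def real_sqrt_mult)

lemma hn_orth: "integrable lborel (\<lambda>t. std_normal_density t * (hn n t * hn m t))"
   "(LINT t|lborel. std_normal_density t * (hn n t * hn m t)) = (if n = m then 1 else 0)"
proof -
  have eq: "(\<lambda>t. std_normal_density t * (hn n t * hn m t)) =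
      (\<lambda>t. std_normal_density t * ((sqrt (fact n) * sqrt (fact m)) * herm n t * herm m t))"
    by (simp add: hn_def mult_ac)
  show "integrable lborel (\<lambda>t. std_normal_density t * (hn n t * hn m t))"
    unfolding eq by (rule integrable_herm)
  have "(LINT t|lborel. std_normal_density t * (hn n t * hn m t)) =
      (sqrt (fact n) * sqrt (fact m)) * (LINT t|lborel. std_normal_density t * (herm n t * herm m t))"
  proof -
    have "(\<lambda>t. std_normal_density t * (hn n t * hn m t)) =
      (\<lambda>t. (sqrt (fact n) * sqrt (fact m)) * (std_normal_density t * (herm n t * herm m t)))"
      by (simp add: hn_def mult_ac)
    then show ?thesis by (simp only: integral_mult_right_zero)
  qed
  also have "\<dots> = (if n = m then 1 else 0)"
    by (simp add: herm_E E_HP_HP)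
  finally show "(LINT t|lborel. std_normal_density t * (hn n t * hn m t)) = (if n = m then 1 else 0)" .
qed

lemma H_orth: "integrable lborel (\<lambda>x. H k x * H l x * gauss2 x)"
   "(LINT x|lborel. H k x * H l x * gauss2 x) = (if k = l then 1 else 0)"
proof -
  have eq: "(\<lambda>x. H k x * H l x * gauss2 x) =
     (\<lambda>x. (\<lambda>t. hn (fst k) t * hn (fst l) t) (x$1) * (\<lambda>t. hn (snd k) t * hn (snd l) t) (x$2) * gauss2 x)"
    by (simp add: H_def mult_ac)
  show "integrable lborel (\<lambda>x. H k x * H l x * gauss2 x)"
    unfolding eq by (rule prod2) (rule hn_orth)+
  show "(LINT x|lborel. H k x * H l x * gauss2 x) = (if k = l then 1 else 0)"
    unfolding eq by (subst prod2) (auto simp: hn_orth prod_eq_iff)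
qed

lemma gauss2_int: "integrable lborel gauss2" "(LINT x|lborel. gauss2 x) = 1"
proof -
  have i1: "integrable lborel (\<lambda>t. std_normal_density t * (\<lambda>t. 1) t)"
    using integrable_std_normal_moment[of 0] by simp
  have v1: "(LINT t|lborel. std_normal_density t * (\<lambda>t. 1) t) = 1"
    using mom_0 unfolding mom_def by simp
  show "integrable lborel gauss2" using prod2(1)[OF i1 i1] by simp
  show "(LINT x|lborel. gauss2 x) = 1" using prod2(2)[OF i1 i1] v1 by simp
qed

lemma gauss2_nonneg: "0 \<le> gauss2 x"
  by (simp add: gauss2_def)




lemma abs_le_sq1: "\<bar>h::real\<bar> \<le> h*h + 1"
proof -
  have a: "\<bar>h\<bar>*\<bar>h\<bar> = h*h" by (rule abs_mult_self_eq)
  have "0 \<le> (\<bar>h\<bar> - 1)*(\<bar>h\<bar> - 1)" by simp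
  then have "0 \<le> h*h - 2*\<bar>h\<bar> + 1" using a by (simp add: algebra_simps)
  moreover have "0 \<le> h*h" by simp
  ultimately show ?thesis by linarith
qed

lemma H_meas: "H k \<in> borel_measurable lborel"
  unfolding H_def hn_def herm_def by measurable

lemma gauss2_meas: "gauss2 \<in> borel_measurable lborel"
  unfolding gauss2_def by measurable

lemma H_int_bounded:
  assumes um: "u \<in> borel_measurable lborel" and ub: "\<And>x. \<bar>u x\<bar> \<le> 1"
  shows "integrable lborel (\<lambda>x. H k x * u x * gauss2 x)"
proof (rule Bochner_Integration.integrable_bound)
  show "integrable lborel (\<lambda>x. H k x * H k x * gauss2 x + gauss2 x)"
    using H_orth(1) gauss2_int(1) by (rule Bochner_Integration.integrable_add)
  show "(\<lambda>x. H k x * u x * gauss2 x) \<in> borel_measurable lborel"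
    using H_meas um gauss2_meas by measurable
  show "AE x in lborel. norm (H k x * u x * gauss2 x) \<le> norm (H k x * H k x * gauss2 x + gauss2 x)"
  proof (rule AE_I2)
    fix x
    have g: "0 \<le> gauss2 x" by (rule gauss2_nonneg)
    have "norm (H k x * u x * gauss2 x) = \<bar>H k x\<bar> * \<bar>u x\<bar> * gauss2 x"
      using g by (simp add: abs_mult)
    also have "\<dots> \<le> \<bar>H k x\<bar> * 1 * gauss2 x"
      using g ub[of x] by (intro mult_right_mono mult_left_mono) auto
    also have "\<dots> \<le> (H k x * H k x + 1) * gauss2 x"
      using g abs_le_sq1[of "H k x"] by (intro mult_right_mono) auto
    also have "\<dots> = norm (H k x * H k x * gauss2 x + gauss2 x)"
      using g by (simp add: algebra_simps)
    finally show "norm (H k x * u x * gauss2 x) \<le> norm (H k x * H k x * gauss2 x + gauss2 x)" .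
  qed
qed

lemma uu_int:
  assumes um: "u \<in> borel_measurable lborel" and ub: "\<And>x. \<bar>u x\<bar> \<le> 1"
  shows "integrable lborel (\<lambda>x. u x * u x * gauss2 x)"
proof (rule Bochner_Integration.integrable_bound)
  show "integrable lborel gauss2" by (rule gauss2_int(1))
  show "(\<lambda>x. u x * u x * gauss2 x) \<in> borel_measurable lborel"
    using um gauss2_meas by measurable
  show "AE x in lborel. norm (u x * u x * gauss2 x) \<le> norm (gauss2 x)"
  proof (rule AE_I2)
    fix x
    have g: "0 \<le> gauss2 x" by (rule gauss2_nonneg)
    have "\<bar>u x\<bar> * \<bar>u x\<bar> \<le> 1 * 1" using ub[of x] by (intro mult_mono) auto
    then have "\<bar>u x * u x\<bar> \<le> 1" by (simp add: abs_mult)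
    then have "\<bar>u x * u x\<bar> * gauss2 x \<le> 1 * gauss2 x" using g by (intro mult_right_mono) auto
    then show "norm (u x * u x * gauss2 x) \<le> norm (gauss2 x)" using g by (simp add: abs_mult)
  qed
qed


lemma bessel:
  assumes um: "u \<in> borel_measurable lborel" and ub: "\<And>x. \<bar>u x\<bar> \<le> 1" and K: "finite K"
  shows "(\<Sum>k\<in>K. (LINT x|lborel. H k x * u x * gauss2 x)^2) \<le> (LINT x|lborel. u x * u x * gauss2 x)"
proof -
  define c where "c k = (LINT x|lborel. H k x * u x * gauss2 x)" for k
  define S where "S x = (\<Sum>k\<in>K. c k * H k x)" for x
  have iH: "\<And>k. integrable lborel (\<lambda>x. H k x * u x * gauss2 x)"
    using um ub by (rule H_int_bounded)
  have iHH: "\<And>k l. integrable lborel (\<lambda>x. H k x * H l x * gauss2 x)" by (rule H_orth(1))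
  have iuu: "integrable lborel (\<lambda>x. u x * u x * gauss2 x)" using um ub by (rule uu_int)
  have e1: "(\<lambda>x. u x * S x * gauss2 x) = (\<lambda>x. \<Sum>k\<in>K. c k * (H k x * u x * gauss2 x))"
    by (rule ext) (simp add: S_def sum_distrib_left sum_distrib_right mult_ac)
  have i1: "integrable lborel (\<lambda>x. u x * S x * gauss2 x)"
    unfolding e1 by (intro Bochner_Integration.integrable_sum integrable_mult_right iH)
  have I1: "(LINT x|lborel. u x * S x * gauss2 x) = (\<Sum>k\<in>K. c k * c k)"
    unfolding e1 by (simp add: integral_sum integrable_mult_right iH c_def)
  have e2: "(\<lambda>x. S x * S x * gauss2 x) = (\<lambda>x. \<Sum>k\<in>K. \<Sum>l\<in>K. c k * c l * (H k x * H l x * gauss2 x))"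
    by (rule ext) (simp only: S_def sum_product, simp only: sum_distrib_right, simp add: mult_ac)
  have i2: "integrable lborel (\<lambda>x. S x * S x * gauss2 x)"
    unfolding e2 by (intro Bochner_Integration.integrable_sum integrable_mult_right iHH)
  have I2: "(LINT x|lborel. S x * S x * gauss2 x) = (\<Sum>k\<in>K. c k * c k)"
  proof -
    have "(LINT x|lborel. S x * S x * gauss2 x) = (\<Sum>k\<in>K. \<Sum>l\<in>K. c k * c l * (if k = l then 1 else 0))"
      unfolding e2
      by (simp add: integral_sum Bochner_Integration.integrable_sum integrable_mult_right iHH H_orth(2) del: mult_if_delta)
    also have "\<dots> = (\<Sum>k\<in>K. c k * c k)"
      using K by (simp add: if_distrib[of "\<lambda>z. _ * z"] cong: if_cong)
    finally show ?thesis .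
  qed
  have e3: "(\<lambda>x. (u x - S x) * (u x - S x) * gauss2 x) =
      (\<lambda>x. u x * u x * gauss2 x - 2 * (u x * S x * gauss2 x) + S x * S x * gauss2 x)"
    by (rule ext) (simp add: algebra_simps)
  have "0 \<le> (LINT x|lborel. (u x - S x) * (u x - S x) * gauss2 x)"
    by (rule integral_nonneg_AE) (simp add: gauss2_nonneg)
  also have "\<dots> = (LINT x|lborel. u x * u x * gauss2 x) - 2 * (\<Sum>k\<in>K. c k * c k) + (\<Sum>k\<in>K. c k * c k)"
    unfolding e3 using iuu i1 i2 I1 I2 by simp
  finally show ?thesis by (simp add: c_def power2_eq_square)
qed


lemma Delta3_props:
  assumes "v \<in> Delta3"
  shows "0 \<le> v $ i" "v $ i \<le> 1" "(\<Sum>j\<in>UNIV. v $ j) = 1"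
proof -
  show n: "0 \<le> v $ i" "(\<Sum>j\<in>UNIV. v $ j) = 1" using assms by (auto simp: Delta3_def)
  have "v $ i \<le> (\<Sum>j\<in>UNIV. v $ j)"
    using assms by (intro member_le_sum) (auto simp: Delta3_def)
  then show "v $ i \<le> 1" using n by simp
qed

lemma hcoef_comp: "hcoef k h $ i = (LINT x|lborel. H k x * (h x $ i) * gauss2 x)"
  by (simp add: hcoef_def H_eq)

lemma comp_meas:
  fixes h :: "real^2 \<Rightarrow> real^'n"
  assumes "h \<in> borel_measurable lborel"
  shows "(\<lambda>x. h x $ i) \<in> borel_measurable lborel"
proof -
  have "(\<lambda>v::real^'n. v $ i) \<in> borel_measurable borel"
    by (intro borel_measurable_continuous_onI continuous_on_component continuous_on_id)
  then show ?thesis by (rule measurable_compose[OF assms])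
qed

lemma bessel_vec:
  assumes hm: "h \<in> borel_measurable lborel" and hD: "\<forall>x. h x \<in> Delta3" and K: "finite K"
  shows "(\<Sum>k\<in>K. hcoef k h \<bullet> hcoef k h) \<le> 1"
proof -
  have b: "\<And>x i. \<bar>h x $ i\<bar> \<le> 1"
    using Delta3_props[OF hD[rule_format]] by (simp add: abs_le_iff)
  have "(\<Sum>k\<in>K. hcoef k h \<bullet> hcoef k h) = (\<Sum>i\<in>UNIV. \<Sum>k\<in>K. (LINT x|lborel. H k x * (h x $ i) * gauss2 x)^2)"
    by (simp add: inner_vec_def hcoef_comp power2_eq_square sum.swap[of _ K])
  also have "\<dots> \<le> (\<Sum>i\<in>UNIV. (LINT x|lborel. (h x $ i) * (h x $ i) * gauss2 x))"
    by (intro sum_mono bessel comp_meas hm b K)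
  also have "\<dots> = (LINT x|lborel. (\<Sum>i\<in>UNIV. (h x $ i) * (h x $ i) * gauss2 x))"
    by (rule Bochner_Integration.integral_sum[symmetric]) (rule uu_int[OF comp_meas[OF hm] b])
  also have "\<dots> \<le> (LINT x|lborel. gauss2 x)"
  proof (rule integral_mono)
    show "integrable lborel (\<lambda>x. \<Sum>i\<in>UNIV. (h x $ i) * (h x $ i) * gauss2 x)"
      by (rule Bochner_Integration.integrable_sum) (rule uu_int[OF comp_meas[OF hm] b])
    show "integrable lborel gauss2" by (rule gauss2_int(1))
    fix x
    have "(\<Sum>i\<in>UNIV. (h x $ i) * (h x $ i)) \<le> (\<Sum>i\<in>UNIV. h x $ i)"
    proof (rule sum_mono)
      fix i
      have "0 \<le> h x $ i" "h x $ i \<le> 1" using Delta3_props[OF hD[rule_format]] by auto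
      then show "h x $ i * (h x $ i) \<le> h x $ i" using mult_left_le by blast
    qed
    also have "\<dots> = 1" using Delta3_props[OF hD[rule_format]] by simp
    finally have "(\<Sum>i\<in>UNIV. (h x $ i) * (h x $ i)) * gauss2 x \<le> 1 * gauss2 x"
      using gauss2_nonneg by (intro mult_right_mono) auto
    then show "(\<Sum>i\<in>UNIV. (h x $ i) * (h x $ i) * gauss2 x) \<le> gauss2 x"
      by (simp add: sum_distrib_right)
  qed
  also have "\<dots> = 1" by (rule gauss2_int(2))
  finally show ?thesis .
qed

lemma abs_inner_le: "\<bar>inner (a::'a::real_inner) b\<bar> \<le> (inner a a + inner b b) / 2"
proof -
  have "0 \<le> inner (a - b) (a - b)" "0 \<le> inner (a + b) (a + b)" by simp_all
  then have "0 \<le> inner a a - 2 * inner a b + inner b b" "0 \<le> inner a a + 2 * inner a b + inner b b"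
    by (simp_all add: inner_diff_left inner_diff_right inner_add_left inner_add_right inner_commute[of b a])
  then show ?thesis by (simp add: abs_le_iff field_simps)
qed




lemma norm2_eq: "norm (x::real^2) * norm x = (x$1)^2 + (x$2)^2"
proof -
  have "norm x * norm x = x \<bullet> x" by (simp add: power2_norm_eq_inner[symmetric] power2_eq_square)
  then show ?thesis by (simp add: inner_vec_def sum_2 power2_eq_square)
qed

lemma mono2: "integrable lborel (\<lambda>x::real^2. (x$1)^i * (x$2)^j * gauss2 x)"
  "(LINT x|lborel. (x$1)^i * (x$2)^j * gauss2 x) = mom i * mom j"
  using prod2[of "\<lambda>t. t^i" "\<lambda>t. t^j"] integrable_std_normal_moment[of i] integrable_std_normal_moment[of j]
  by (simp_all add: mom_def)

lemma mom_2: "mom 2 = 1" using mom_even[of 1] by simp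
lemma mom_4: "mom 4 = 3" using mom_even[of 2] by (simp add: fact_numeral)

lemma phi_meas: "phiw \<rho> \<in> borel_measurable lborel"
  unfolding phiw_def by measurable

lemma phi_pointwise:
  fixes \<rho> :: real
  assumes r0: "0 < \<rho>" "\<rho> < 1/10"
  defines "q \<equiv> 1 - \<rho>*\<rho>"
  defines "c \<equiv> \<rho> / q"
  defines "a \<equiv> (11/10*\<rho>)*(11/10*\<rho>)/q"
  defines "b \<equiv> (11/10*\<rho>)/q"
  shows "0 \<le> phiw \<rho> x"
    and "phiw \<rho> x \<le> c * (1 + ((x$1)^2 + (x$2)^2))"
    and "c * ((3/4 - a/2 - b) * ((x$1)^2 + (x$2)^2) - (1/16 + a/2) * ((x$1)^2 + (x$2)^2)^2) \<le> phiw \<rho> x"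
proof -
  define r where "r = norm x"
  have r0': "0 \<le> r" by (simp add: r_def)
  have rr: "\<rho> * \<rho> \<le> \<rho> * (1/10)" using r0 by (intro mult_left_mono) auto
  have q0: "0 < q" unfolding q_def using r0 rr by linarith
  have c0: "0 \<le> c" unfolding c_def using q0 r0 by simp
  have a0: "0 \<le> a" unfolding a_def using q0 by simp
  have b0: "0 \<le> b" unfolding b_def using q0 r0 by simp
  define t where "t = a*r*r + b*r"
  have t0: "0 \<le> t" unfolding t_def using a0 b0 r0' by simp
  have ph: "phiw \<rho> x = c * r * exp (- t)"
    unfolding phiw_def c_def t_def a_def b_def r_def q_def
    by (simp add: field_simps)
  have s: "(x$1)^2 + (x$2)^2 = r*r" by (simp add: r_def norm2_eq)
  show "0 \<le> phiw \<rho> x" unfolding ph using c0 r0' by simp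
  have "c * r * exp (- t) \<le> c * r * 1" using c0 r0' t0 by (intro mult_left_mono) auto
  also have "\<dots> \<le> c * (1 + r*r)"
  proof -
    have "r \<le> 1 + r*r" using abs_le_sq1[of r] r0' by simp
    then show ?thesis using c0 by (simp add: mult_left_mono)
  qed
  finally show "phiw \<rho> x \<le> c * (1 + ((x$1)^2 + (x$2)^2))" unfolding ph s .
  have e: "1 - t \<le> exp (- t)" using exp_ge_add_one_self[of "-t"] by simp
  have poly: "(3/4 - a/2 - b) * (r*r) - (1/16 + a/2) * (r*r)^2 \<le> r * (1 - t)"
  proof -
    have h1: "0 \<le> r * ((r-2)*(r-2)) * (r+4)" using r0' by simp
    have h2: "0 \<le> a * (r*r*((r-1)*(r-1)))" using a0 by simp
    have id: "r * (1 - t) - ((3/4 - a/2 - b) * (r*r) - (1/16 + a/2) * (r*r)^2)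
       = r * ((r-2)*(r-2)) * (r+4) / 16 + a * (r*r*((r-1)*(r-1))) / 2"
      unfolding t_def power2_eq_square by (simp add: field_simps; simp add: algebra_simps)
    show ?thesis using h1 h2 id by linarith
  qed
  have "c * ((3/4 - a/2 - b) * (r*r) - (1/16 + a/2) * (r*r)^2) \<le> c * (r * (1 - t))"
    using poly c0 by (rule mult_left_mono)
  also have "\<dots> \<le> c * (r * exp (- t))"
    using e c0 r0' by (intro mult_left_mono) auto
  finally show "c * ((3/4 - a/2 - b) * ((x$1)^2 + (x$2)^2) - (1/16 + a/2) * ((x$1)^2 + (x$2)^2)^2) \<le> phiw \<rho> x"
    unfolding ph s by (simp add: mult_ac)
qed


lemma M_facts:
  "integrable lborel (\<lambda>x::real^2. (x$1)^2 * gauss2 x)" "(LINT x|lborel. (x$1)^2 * gauss2 x) = 1"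
  "integrable lborel (\<lambda>x::real^2. (x$2)^2 * gauss2 x)" "(LINT x|lborel. (x$2)^2 * gauss2 x) = 1"
  "integrable lborel (\<lambda>x::real^2. (x$1)^4 * gauss2 x)" "(LINT x|lborel. (x$1)^4 * gauss2 x) = 3"
  "integrable lborel (\<lambda>x::real^2. (x$2)^4 * gauss2 x)" "(LINT x|lborel. (x$2)^4 * gauss2 x) = 3"
  "integrable lborel (\<lambda>x::real^2. (x$1)^2 * (x$2)^2 * gauss2 x)" "(LINT x|lborel. (x$1)^2 * (x$2)^2 * gauss2 x) = 1"
  using mono2[of 2 0] mono2[of 0 2] mono2[of 4 0] mono2[of 0 4] mono2[of 2 2]
  by (simp_all add: mom_0 mom_2 mom_4)

lemma phi_int:
  assumes r0: "0 < \<rho>" "\<rho> < 1/10"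
  shows "integrable lborel (\<lambda>x. phiw \<rho> x * gauss2 x)"
proof (rule Bochner_Integration.integrable_bound)
  define c where "c = \<rho> / (1 - \<rho>*\<rho>)"
  have eq: "(\<lambda>x::real^2. c * (1 + ((x$1)^2 + (x$2)^2)) * gauss2 x) =
     (\<lambda>x. c * gauss2 x + c * ((x$1)^2 * gauss2 x) + c * ((x$2)^2 * gauss2 x))"
    by (rule ext) (simp add: algebra_simps)
  show "integrable lborel (\<lambda>x::real^2. c * (1 + ((x$1)^2 + (x$2)^2)) * gauss2 x)"
    unfolding eq
    by (intro Bochner_Integration.integrable_add integrable_mult_right gauss2_int(1) M_facts)
  show "(\<lambda>x. phiw \<rho> x * gauss2 x) \<in> borel_measurable lborel"
    using phi_meas gauss2_meas by measurable
  show "AE x in lborel. norm (phiw \<rho> x * gauss2 x) \<le> norm (c * (1 + ((x$1)^2 + (x$2)^2)) * gauss2 x)"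
  proof (rule AE_I2)
    fix x :: "real^2"
    have p0: "0 \<le> phiw \<rho> x" by (rule phi_pointwise(1)[OF r0])
    have p1: "phiw \<rho> x \<le> c * (1 + ((x$1)^2 + (x$2)^2))" unfolding c_def by (rule phi_pointwise(2)[OF r0])
    have g: "0 \<le> gauss2 x" by (rule gauss2_nonneg)
    have "phiw \<rho> x * gauss2 x \<le> c * (1 + ((x$1)^2 + (x$2)^2)) * gauss2 x"
      using p1 g by (rule mult_right_mono)
    then show "norm (phiw \<rho> x * gauss2 x) \<le> norm (c * (1 + ((x$1)^2 + (x$2)^2)) * gauss2 x)"
      using p0 g by simp
  qed
qed

lemma normsq_bounds:
  assumes "v \<in> Delta3"
  shows "1/3 \<le> norm v * norm v" "norm v * norm v \<le> 1"
proof -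
  have nv: "norm v * norm v = (v$1)*(v$1) + (v$2)*(v$2) + (v$3)*(v$3)"
  proof -
    have "norm v * norm v = v \<bullet> v" by (simp add: power2_norm_eq_inner[symmetric] power2_eq_square)
    then show ?thesis by (simp add: inner_vec_def sum_3)
  qed
  have s: "v$1 + v$2 + v$3 = 1" using Delta3_props(3)[OF assms] by (simp add: sum_3)
  have p: "\<And>i. 0 \<le> v$i" "\<And>i. v$i \<le> 1" using Delta3_props[OF assms] by auto
  have "0 \<le> (v$1 - v$2)*(v$1 - v$2) + (v$2 - v$3)*(v$2 - v$3) + (v$1 - v$3)*(v$1 - v$3)" by simp
  moreover have "(v$1 + v$2 + v$3) * (v$1 + v$2 + v$3) = 1" using s by simp
  ultimately show "1/3 \<le> norm v * norm v" unfolding nv by (simp add: algebra_simps)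
  have "\<And>i. v$i * v$i \<le> v$i" using p by (simp add: mult_left_le)
  then have "(v$1)*(v$1) + (v$2)*(v$2) + (v$3)*(v$3) \<le> v$1 + v$2 + v$3"
    by (intro add_mono) auto
  then show "norm v * norm v \<le> 1" unfolding nv using s by simp
qed

lemma phi_h_int:
  assumes r0: "0 < \<rho>" "\<rho> < 1/10" and hm: "h \<in> borel_measurable lborel" and hD: "\<forall>x. h x \<in> Delta3"
  shows "integrable lborel (\<lambda>x. phiw \<rho> x * (norm (h x) * norm (h x)) * gauss2 x)"
proof (rule Bochner_Integration.integrable_bound)
  show "integrable lborel (\<lambda>x. phiw \<rho> x * gauss2 x)" by (rule phi_int[OF r0])
  show "(\<lambda>x. phiw \<rho> x * (norm (h x) * norm (h x)) * gauss2 x) \<in> borel_measurable lborel"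
    using phi_meas gauss2_meas hm by measurable
  show "AE x in lborel. norm (phiw \<rho> x * (norm (h x) * norm (h x)) * gauss2 x) \<le> norm (phiw \<rho> x * gauss2 x)"
  proof (rule AE_I2)
    fix x
    have p0: "0 \<le> phiw \<rho> x" by (rule phi_pointwise(1)[OF r0])
    have g: "0 \<le> gauss2 x" by (rule gauss2_nonneg)
    have n1: "norm (h x) * norm (h x) \<le> 1" using normsq_bounds(2) hD by blast
    have "phiw \<rho> x * (norm (h x) * norm (h x)) * gauss2 x \<le> phiw \<rho> x * 1 * gauss2 x"
      using p0 g n1 by (intro mult_right_mono mult_left_mono) auto
    then show "norm (phiw \<rho> x * (norm (h x) * norm (h x)) * gauss2 x) \<le> norm (phiw \<rho> x * gauss2 x)"
      using p0 g by simp
  qed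
qed


lemma J_lower:
  assumes r0: "0 < \<rho>" "\<rho> < 1/10"
  shows "3/5 * \<rho> \<le> (LINT x|lborel. phiw \<rho> x * gauss2 x)"
proof -
  define q where "q = 1 - \<rho>*\<rho>"
  define c where "c = \<rho> / q"
  define a where "a = (11/10*\<rho>)*(11/10*\<rho>)/q"
  define b where "b = (11/10*\<rho>)/q"
  have rr: "\<rho> * \<rho> \<le> \<rho> * (1/10)" using r0 by (intro mult_left_mono) auto
  have q0: "0 < q" unfolding q_def using r0 rr by linarith
  have q1: "q \<le> 1" unfolding q_def by simp
  have qb: "99/100 < q" unfolding q_def using r0 rr by linarith
  have e: "(11/10*\<rho>)*(11/10*\<rho>) = 121/100*(\<rho>*\<rho>)" by simp
  have rr2: "\<rho>*\<rho> < (1/10)*(1/10)" using r0 by (intro mult_strict_mono) auto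
  have e2: "1/80 * q = 1/80 - (\<rho>*\<rho>)/80" unfolding q_def by (simp add: field_simps)
  have "121/100*(\<rho>*\<rho>) \<le> 1/80 * q" unfolding e2 using rr2 by linarith
  then have aa: "a \<le> 1/80" unfolding a_def e using q0 by (simp add: pos_divide_le_eq)
  have bb: "b \<le> 1/9" unfolding b_def using q0 qb r0 by (simp add: pos_divide_le_eq)
  have cc: "\<rho> \<le> c" unfolding c_def using q0 q1 r0 by (simp add: pos_le_divide_eq mult_left_le)
  define L where "L x = c * ((3/4 - a/2 - b) * ((x$1)^2 + (x$2)^2) - (1/16 + a/2) * ((x$1)^2 + (x$2)^2)^2) * gauss2 x" for x :: "real^2"
  have Leq: "L = (\<lambda>x. (c*(3/4 - a/2 - b)) * ((x$1)^2 * gauss2 x) + (c*(3/4 - a/2 - b)) * ((x$2)^2 * gauss2 x)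
     - (c*(1/16 + a/2)) * ((x$1)^4 * gauss2 x) - (2*c*(1/16 + a/2)) * ((x$1)^2 * (x$2)^2 * gauss2 x)
     - (c*(1/16 + a/2)) * ((x$2)^4 * gauss2 x))"
  proof (rule ext)
    fix x :: "real^2"
    have sq: "((x$1)^2 + (x$2)^2)^2 = (x$1)^4 + 2*((x$1)^2*(x$2)^2) + (x$2)^4"
      by (simp add: algebra_simps eval_nat_numeral)
    show "L x = (c*(3/4 - a/2 - b)) * ((x$1)^2 * gauss2 x) + (c*(3/4 - a/2 - b)) * ((x$2)^2 * gauss2 x)
     - (c*(1/16 + a/2)) * ((x$1)^4 * gauss2 x) - (2*c*(1/16 + a/2)) * ((x$1)^2 * (x$2)^2 * gauss2 x)
     - (c*(1/16 + a/2)) * ((x$2)^4 * gauss2 x)"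
      unfolding L_def sq by (simp add: algebra_simps)
  qed
  have Li: "integrable lborel L"
    unfolding Leq by (intro Bochner_Integration.integrable_add Bochner_Integration.integrable_diff integrable_mult_right M_facts)
  have LI: "(LINT x|lborel. L x) = c * (1 - 5*a - 2*b)"
  proof -
    have h: "\<And>f v. integrable lborel f \<Longrightarrow> integral\<^sup>L lborel f = v \<Longrightarrow> has_bochner_integral lborel f v"
      by (simp add: has_bochner_integral_iff)
    have "has_bochner_integral lborel L ((c*(3/4 - a/2 - b)) * 1 + (c*(3/4 - a/2 - b)) * 1
       - (c*(1/16 + a/2)) * 3 - (2*c*(1/16 + a/2)) * 1 - (c*(1/16 + a/2)) * 3)"
      unfolding Leq
      by (intro has_bochner_integral_add has_bochner_integral_diff has_bochner_integral_mult_right h M_facts)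
    then have "(LINT x|lborel. L x) = (c*(3/4 - a/2 - b)) * 1 + (c*(3/4 - a/2 - b)) * 1
       - (c*(1/16 + a/2)) * 3 - (2*c*(1/16 + a/2)) * 1 - (c*(1/16 + a/2)) * 3"
      by (simp add: has_bochner_integral_iff)
    then show ?thesis by (simp add: algebra_simps)
  qed
  have "(LINT x|lborel. L x) \<le> (LINT x|lborel. phiw \<rho> x * gauss2 x)"
  proof (rule integral_mono[OF Li phi_int[OF r0]])
    fix x
    have "c * ((3/4 - a/2 - b) * ((x$1)^2 + (x$2)^2) - (1/16 + a/2) * ((x$1)^2 + (x$2)^2)^2) \<le> phiw \<rho> x"
      unfolding c_def a_def b_def q_def by (rule phi_pointwise(3)[OF r0])
    then show "L x \<le> phiw \<rho> x * gauss2 x" unfolding L_def using gauss2_nonneg by (rule mult_right_mono)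
  qed
  moreover have "3/5 * \<rho> \<le> c * (1 - 5*a - 2*b)"
  proof -
    have "3/5 \<le> 1 - 5*a - 2*b" using aa bb by linarith
    then have "\<rho> * (3/5) \<le> c * (1 - 5*a - 2*b)" using cc r0 by (intro mult_mono) auto
    then show ?thesis by simp
  qed
  ultimately show ?thesis using LI by linarith
qed

lemma A_lower:
  assumes r0: "0 < \<rho>" "\<rho> < 1/10" and hm: "h \<in> borel_measurable lborel" and hD: "\<forall>x. h x \<in> Delta3"
  shows "(LINT x|lborel. phiw \<rho> x * gauss2 x) / 3 \<le> (LINT x|lborel. phiw \<rho> x * (norm (h x) * norm (h x)) * gauss2 x)"
proof -
  have "(LINT x|lborel. phiw \<rho> x * gauss2 x) / 3 = (LINT x|lborel. (1/3) * (phiw \<rho> x * gauss2 x))"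
    by simp
  also have "\<dots> \<le> (LINT x|lborel. phiw \<rho> x * (norm (h x) * norm (h x)) * gauss2 x)"
  proof (rule integral_mono)
    show "integrable lborel (\<lambda>x. (1/3) * (phiw \<rho> x * gauss2 x))"
      by (intro integrable_mult_right phi_int[OF r0])
    show "integrable lborel (\<lambda>x. phiw \<rho> x * (norm (h x) * norm (h x)) * gauss2 x)"
      by (rule phi_h_int[OF r0 hm hD])
    fix x
    have p0: "0 \<le> phiw \<rho> x * gauss2 x" using phi_pointwise(1)[OF r0] gauss2_nonneg by simp
    have n1: "1/3 \<le> norm (h x) * norm (h x)" using normsq_bounds(1) hD by blast
    have "(1/3) * (phiw \<rho> x * gauss2 x) \<le> (norm (h x) * norm (h x)) * (phiw \<rho> x * gauss2 x)"
      using n1 p0 by (rule mult_right_mono)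
    then show "(1/3) * (phiw \<rho> x * gauss2 x) \<le> phiw \<rho> x * (norm (h x) * norm (h x)) * gauss2 x"
      by (simp add: mult_ac)
  qed
  finally show ?thesis .
qed




theorem lemma5p2:
  fixes \<rho> :: real and f g :: "real^2 \<Rightarrow> real^3"
  assumes "0 < \<rho>" "\<rho> < 1/10"
    and "f \<in> borel_measurable lborel" "g \<in> borel_measurable lborel"
    and "\<forall>x. f x \<in> Delta3" "\<forall>x. g x \<in> Delta3"
  shows "summable (\<lambda>n. level_term \<rho> f g (n + 2)) \<and>
         (\<Sum>n. level_term \<rho> f g (n + 2)) \<le>
         (5 * \<rho> + 8 * \<rho> * \<rho>) * (1/2) *
           ((LINT x|lborel. phiw \<rho> x * (norm (f x) * norm (f x)) * gauss2 x) +
            (LINT x|lborel. phiw \<rho> x * (norm (g x) * norm (g x)) * gauss2 x))"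
proof -
  note r0 = assms(1,2)
  define a where "a k = hcoef k f \<bullet> hcoef k f + hcoef k g \<bullet> hcoef k g" for k
  define S where "S d = {k::nat\<times>nat. fst k + snd k = d}" for d
  have Sfin: "finite (S d)" for d
    by (rule finite_subset[of _ "{..d} \<times> {..d}"]) (auto simp: S_def)
  have a0: "0 \<le> a k" for k by (simp add: a_def)
  have Ba: "sum a K \<le> 2" if K: "finite K" for K
  proof -
    have "sum a K = (\<Sum>k\<in>K. hcoef k f \<bullet> hcoef k f) + (\<Sum>k\<in>K. hcoef k g \<bullet> hcoef k g)"
      by (simp add: a_def sum.distrib)
    also have "\<dots> \<le> 1 + 1"
      using bessel_vec[OF assms(3,5) K] bessel_vec[OF assms(4,6) K] by (rule add_mono)
    finally show ?thesis by simp
  qed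
  have lt: "level_term \<rho> f g d \<le> \<rho>^d * (sum a (S d) / 2)" for d
  proof -
    have "(\<Sum>k\<in>S d. \<bar>hcoef k f \<bullet> hcoef k g\<bar>) \<le> (\<Sum>k\<in>S d. a k / 2)"
      unfolding a_def by (intro sum_mono abs_inner_le)
    also have "\<dots> = sum a (S d) / 2" by (simp add: sum_divide_distrib)
    finally have "(\<Sum>k\<in>S d. \<bar>hcoef k f \<bullet> hcoef k g\<bar>) \<le> sum a (S d) / 2" .
    then show ?thesis unfolding level_term_def S_def[symmetric] using r0
      by (intro mult_left_mono) auto
  qed
  have lt0: "0 \<le> level_term \<rho> f g d" for d
    unfolding level_term_def using r0 by (intro mult_nonneg_nonneg sum_nonneg) auto
  have partial: "(\<Sum>n<N. level_term \<rho> f g (n+2)) \<le> \<rho>*\<rho>" for N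
  proof -
    have "(\<Sum>n<N. level_term \<rho> f g (n+2)) \<le> (\<Sum>n<N. \<rho>^2 * (sum a (S (n+2)) / 2))"
    proof (rule sum_mono)
      fix n
      have "\<rho>^(n+2) \<le> \<rho>^2" using r0 by (intro power_decreasing) auto
      moreover have "0 \<le> sum a (S (n+2)) / 2" using a0 by (simp add: sum_nonneg)
      ultimately have "\<rho>^(n+2) * (sum a (S (n+2)) / 2) \<le> \<rho>^2 * (sum a (S (n+2)) / 2)"
        by (rule mult_right_mono)
      then show "level_term \<rho> f g (n+2) \<le> \<rho>^2 * (sum a (S (n+2)) / 2)"
        using lt[of "n+2"] by linarith
    qed
    also have "\<dots> = \<rho>^2 / 2 * (\<Sum>n<N. sum a (S (n+2)))"
      by (simp add: sum_distrib_left sum_divide_distrib)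
    also have "(\<Sum>n<N. sum a (S (n+2))) = sum a (\<Union>n\<in>{..<N}. S (n+2))"
      by (rule sum.UNION_disjoint[symmetric]) (auto simp: Sfin, auto simp: S_def)
    also have "sum a (\<Union>n\<in>{..<N}. S (n+2)) \<le> 2"
      by (rule Ba) (auto simp: Sfin)
    finally have "(\<Sum>n<N. level_term \<rho> f g (n+2)) \<le> \<rho>^2 / 2 * 2"
      using r0 by (simp add: mult_left_mono)
    then show ?thesis by (simp add: power2_eq_square)
  qed
  have summ: "summable (\<lambda>n. level_term \<rho> f g (n + 2))"
    by (rule summableI_nonneg_bounded[OF lt0 partial])
  have sle: "(\<Sum>n. level_term \<rho> f g (n + 2)) \<le> \<rho>*\<rho>"
    by (rule suminf_le_const[OF summ partial])
  define J where "J = (LINT x|lborel. phiw \<rho> x * gauss2 x)"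
  have J: "3/5 * \<rho> \<le> J" unfolding J_def by (rule J_lower[OF r0])
  have Af: "J / 3 \<le> (LINT x|lborel. phiw \<rho> x * (norm (f x) * norm (f x)) * gauss2 x)"
    unfolding J_def by (rule A_lower[OF r0 assms(3,5)])
  have Ag: "J / 3 \<le> (LINT x|lborel. phiw \<rho> x * (norm (g x) * norm (g x)) * gauss2 x)"
    unfolding J_def by (rule A_lower[OF r0 assms(4,6)])
  have sumA: "2/5 * \<rho> \<le> (LINT x|lborel. phiw \<rho> x * (norm (f x) * norm (f x)) * gauss2 x) +
            (LINT x|lborel. phiw \<rho> x * (norm (g x) * norm (g x)) * gauss2 x)"
    using J Af Ag by linarith
  have "\<rho>*\<rho> = (5 * \<rho>) * (1/2) * (2/5 * \<rho>)" by simp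
  also have "\<dots> \<le> (5 * \<rho> + 8 * \<rho> * \<rho>) * (1/2) *
           ((LINT x|lborel. phiw \<rho> x * (norm (f x) * norm (f x)) * gauss2 x) +
            (LINT x|lborel. phiw \<rho> x * (norm (g x) * norm (g x)) * gauss2 x))"
    using r0 sumA by (intro mult_mono) auto
  finally show ?thesis using summ sle by simp
qed


end
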